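(* Let $(a_n)$ be a strictly decreasing sequence of positive reals with $a_n\to0$, let $d>1$, and define $$\alpha_n:=\frac1n\sum_{m\ge1,\,m\ne n}\ln|1-a_m/a_n|\in[-\infty,\infty).$$ 1. If $(n^da_n)$ is eventually monotonically increasing, then $\limsup_{n\to\infty}\alpha_n\le\zeta(d)$. 2. If $(n^da_n)$ is eventually monotonically decreasing, then $\liminf_{n\to\infty}\alpha_n\ge\zeta(d)$.
   Context: $\zeta(d):=\int_0^1\ln(1/z^d-1)\,dz+\int_1^\infty\ln(1-1/z^d)\,dz$ for $d>1$. A real sequence is eventually monotonically increasing (decreasing) if it is monotonically increasing (decreasing) from some index on. *)

theory Defs
  imports "HOL-Analysis.Analysis"
begin

definition zeta_d :: "real \<Rightarrow> real" where
  "zeta_d d = (LBINT z:{0<..<1}. ln (1 / z powr d - 1)) + (LBINT z:{1<..}. ln (1 - 1 / z powr d))"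

text \<open>alpha_n = (1/n) * sum over m >= 1, m ~= n of ln|1 - a_m/a_n|, as an extended real in [-inf, inf).
  The finitely many terms with m < n are summed directly; the terms with m > n are
  nonpositive (for a strictly decreasing positive sequence), so their sum is
  minus the (extended-real) sum of the nonnegative numbers -ln|1 - a_m/a_n|.\<close>
definition alpha :: "(nat \<Rightarrow> real) \<Rightarrow> nat \<Rightarrow> ereal" where
  "alpha a n = ereal (1 / real n) *
     (ereal (\<Sum>m\<in>{1..<n}. ln \<bar>1 - a m / a n\<bar>)
      - (\<Sum>k. ereal (- ln \<bar>1 - a (n + Suc k) / a n\<bar>)))"

end

theory Submission
  imports Defs "HOL-Real_Asymp.Real_Asymp"
begin


lemma dom0_int:
  assumes d: "d > 1"
  shows "set_integrable lborel {0<..<1::real} (\<lambda>z. - ln (1 - z) - d * ln z)"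
proof -
  have "set_integrable lborel (einterval (ereal 0) (ereal 1)) (\<lambda>z. - ln (1 - z) - d * ln z)"
  proof (rule interval_integral_FTC_nonneg(1)[where F = "\<lambda>z. (1 - z) * ln (1 - z) + z + d * (z - z * ln z)"
        and A = 0 and B = "1 + d"])
    show "ereal 0 < ereal 1" by simp
    fix x assume x: "ereal 0 < ereal x" "ereal x < ereal 1"
    then have x': "0 < x" "x < 1" by auto
    show "((\<lambda>z. (1 - z) * ln (1 - z) + z + d * (z - z * ln z)) has_real_derivative - ln (1 - x) - d * ln x) (at x)"
      using x' apply (auto intro!: derivative_eq_intros)
      done
    show "isCont (\<lambda>z. - ln (1 - z) - d * ln z) x"
      using x' by (auto intro!: continuous_intros)
  next
    show "AE x in lborel. ereal 0 < ereal x \<longrightarrow> ereal x < ereal 1 \<longrightarrow> 0 \<le> - ln (1 - x) - d * ln x"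
    proof (intro AE_I2 impI)
      fix x assume "ereal 0 < ereal x" "ereal x < ereal 1"
      then have x: "0 < x" "x < 1" by auto
      have "ln x \<le> 0" "ln (1 - x) \<le> 0" using x by auto
      then show "0 \<le> - ln (1 - x) - d * ln x" using d mult_nonneg_nonpos[of d "ln x"] by linarith
    qed
  next
    show "(((\<lambda>z. (1 - z) * ln (1 - z) + z + d * (z - z * ln z)) \<circ> real_of_ereal) \<longlongrightarrow> 0) (at_right (ereal 0))"
      unfolding ereal_tendsto_simps by real_asymp
    show "(((\<lambda>z. (1 - z) * ln (1 - z) + z + d * (z - z * ln z)) \<circ> real_of_ereal) \<longlongrightarrow> 1 + d) (at_left (ereal 1))"
      unfolding ereal_tendsto_simps by real_asymp
  qed
  then show ?thesis by (simp add: einterval_eq)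
qed



lemma dom1a_int:
  shows "set_integrable lborel {1<..<2::real} (\<lambda>z. ln 2 - ln (z - 1))"
proof -
  have "set_integrable lborel (einterval (ereal 1) (ereal 2)) (\<lambda>z. ln 2 - ln (z - 1))"
  proof (rule interval_integral_FTC_nonneg(1)[where F = "\<lambda>z. z * ln 2 - ((z - 1) * ln (z - 1) - (z - 1))"
        and A = "ln 2" and B = "2 * ln 2 + 1"])
    show "ereal 1 < ereal 2" by simp
    fix x assume x: "ereal 1 < ereal x" "ereal x < ereal 2"
    then have x': "1 < x" "x < 2" by auto
    show "((\<lambda>z. z * ln 2 - ((z - 1) * ln (z - 1) - (z - 1))) has_real_derivative ln 2 - ln (x - 1)) (at x)"
      using x' by (auto intro!: derivative_eq_intros)
    show "isCont (\<lambda>z. ln 2 - ln (z - 1)) x"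
      using x' by (auto intro!: continuous_intros)
  next
    show "AE x in lborel. ereal 1 < ereal x \<longrightarrow> ereal x < ereal 2 \<longrightarrow> 0 \<le> ln 2 - ln (x - 1)"
    proof (intro AE_I2 impI)
      fix x assume "ereal 1 < ereal x" "ereal x < ereal 2"
      then have x: "1 < x" "x < 2" by auto
      have "ln (x - 1) \<le> 0" using x by auto
      moreover have "0 \<le> ln (2::real)" by simp
      ultimately show "0 \<le> ln 2 - ln (x - 1)" by linarith
    qed
  next
    show "(((\<lambda>z. z * ln 2 - ((z - 1) * ln (z - 1) - (z - 1))) \<circ> real_of_ereal) \<longlongrightarrow> ln 2) (at_right (ereal 1))"
      unfolding ereal_tendsto_simps by real_asymp
    show "(((\<lambda>z. z * ln 2 - ((z - 1) * ln (z - 1) - (z - 1))) \<circ> real_of_ereal) \<longlongrightarrow> 2 * ln 2 + 1) (at_left (ereal 2))"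
      unfolding ereal_tendsto_simps by real_asymp
  qed
  then show ?thesis by (simp add: einterval_eq)
qed

lemma dom1b_int:
  assumes d: "d > 1"
  shows "set_integrable lborel {2::real<..} (\<lambda>z. 2 * z powr (-d))"
proof -
  have "set_integrable lborel (einterval (ereal 2) \<infinity>) (\<lambda>z. 2 * z powr (-d))"
  proof (rule interval_integral_FTC_nonneg(1)[where F = "\<lambda>z. 2 * z powr (1 - d) / (1 - d)"
        and A = "2 * 2 powr (1 - d) / (1 - d)" and B = 0])
    show "ereal 2 < \<infinity>" by simp
    fix x assume x: "ereal 2 < ereal x"
    then have x': "2 < x" by auto
    show "((\<lambda>z. 2 * z powr (1 - d) / (1 - d)) has_real_derivative 2 * x powr (-d)) (at x)"
    proof -
      have D: "((\<lambda>z. z powr (1 - d)) has_real_derivative (1 - d) * x powr (1 - d - 1)) (at x)"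
        using x' by (intro has_real_derivative_powr) auto
      have "((\<lambda>z. 2 * z powr (1 - d) / (1 - d)) has_real_derivative 2 * ((1 - d) * x powr (1 - d - 1)) / (1 - d)) (at x)"
        using DERIV_cdivide[OF DERIV_cmult[OF D, of 2], of "1 - d"] by simp
      moreover have "2 * ((1 - d) * x powr (1 - d - 1)) / (1 - d) = 2 * x powr (-d)" using d by simp
      ultimately show ?thesis by simp
    qed
    show "isCont (\<lambda>z. 2 * z powr (-d)) x"
      using x' by (auto intro!: continuous_intros)
  next
    show "AE x in lborel. ereal 2 < ereal x \<longrightarrow> ereal x < \<infinity> \<longrightarrow> 0 \<le> 2 * x powr (-d)"
      by (intro AE_I2 impI) simp
  next
    show "(((\<lambda>z. 2 * z powr (1 - d) / (1 - d)) \<circ> real_of_ereal) \<longlongrightarrow> 2 * 2 powr (1 - d) / (1 - d)) (at_right (ereal 2))"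
      unfolding ereal_tendsto_simps using d by (intro tendsto_intros) auto
    show "(((\<lambda>z. 2 * z powr (1 - d) / (1 - d)) \<circ> real_of_ereal) \<longlongrightarrow> 0) (at_left \<infinity>)"
      unfolding ereal_tendsto_simps using d by real_asymp
  qed
  then show ?thesis by (simp add: einterval_eq)
qed



definition g0 :: "real \<Rightarrow> real \<Rightarrow> real" where "g0 d z = ln (1 / z powr d - 1)"
definition g1 :: "real \<Rightarrow> real \<Rightarrow> real" where "g1 d z = ln (1 - 1 / z powr d)"

lemma powr_lt1: "0 < z \<Longrightarrow> z < 1 \<Longrightarrow> 0 < d \<Longrightarrow> z powr d < (1::real)"
  using powr_less_mono2[of d z 1] by simp

lemma g0_bound:
  assumes d: "d > 1" and z: "0 < z" "z < 1"
  shows "\<bar>g0 d z\<bar> \<le> \<bar>- ln (1 - z) - d * ln z\<bar>"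
proof -
  have zd: "z powr d \<le> z" using z d by (metis powr_le_one_le powr_one less_imp_le order.refl)
  have zd0: "0 < z powr d" using z by simp
  have zd1: "z powr d < 1" using z d by (simp add: powr_lt1)
  have eq: "1 / z powr d - 1 = (1 - z powr d) / z powr d" using zd0 by (simp add: field_simps)
  have "g0 d z = ln (1 - z powr d) - d * ln z"
    unfolding g0_def eq using zd0 zd1 z by (simp add: ln_div ln_powr)
  moreover have "ln (1 - z) \<le> ln (1 - z powr d)" using zd z zd1 by simp
  moreover have "ln (1 - z powr d) \<le> 0" using zd0 zd1 by simp
  moreover have "ln z \<le> 0" using z by simp
  moreover have "ln (1 - z) \<le> 0" using z by simp
  ultimately show ?thesis using d mult_nonneg_nonpos[of d "ln z"] by (auto simp: abs_if)
qed

lemma g0_int: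
  assumes d: "d > 1"
  shows "set_integrable lborel {0<..<1::real} (g0 d)"
proof (rule set_integrable_bound[OF dom0_int[OF d]])
  have "continuous_on {0<..<1::real} (g0 d)"
    unfolding g0_def
    apply (intro continuous_intros ballI)
    using d powr_lt1[of _ d] by (auto simp: field_simps)
  then show "set_borel_measurable lborel {0<..<1} (g0 d)"
    using set_measurable_continuous_on[of "{0<..<1::real}" "g0 d"] by (simp add: set_borel_measurable_def)
  show "AE x in lborel. x \<in> {0<..<1} \<longrightarrow> norm (g0 d x) \<le> norm (- ln (1 - x) - d * ln x)"
    using g0_bound[OF d] by (auto intro!: AE_I2)
qed



lemma powr_ge_self: "1 \<le> z \<Longrightarrow> 1 \<le> d \<Longrightarrow> z \<le> z powr (d::real)"
  using powr_mono[of 1 d z] by simp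

lemma g1_neg:
  assumes d: "d > 1" and z: "1 < z"
  shows "g1 d z < 0" "0 < 1 - 1 / z powr d"
proof -
  have "z \<le> z powr d" using powr_ge_self[of z d] z d by simp
  then have "1 < z powr d" using z by simp
  then have "1 / z powr d < 1" by (simp add: divide_less_eq)
  then show "0 < 1 - 1 / z powr d" by simp
  then show "g1 d z < 0" unfolding g1_def using \<open>1 / z powr d < 1\<close> z by simp
qed

lemma g1_bound_a:
  assumes d: "d > 1" and z: "1 < z" "z < 2"
  shows "\<bar>g1 d z\<bar> \<le> \<bar>ln 2 - ln (z - 1)\<bar>"
proof -
  have zz: "z \<le> z powr d" using powr_ge_self[of z d] z d by simp
  have "1 / z powr d \<le> 1 / z" using zz z by (simp add: frac_le)
  moreover have "(z - 1) / 2 \<le> (z - 1) / z" using z by (intro divide_left_mono) auto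
  moreover have "(z - 1) / z = 1 - 1 / z" using z by (simp add: field_simps)
  ultimately have h: "(z - 1) / 2 \<le> 1 - 1 / z powr d" by linarith
  have "ln ((z - 1) / 2) \<le> ln (1 - 1 / z powr d)" by (rule ln_mono[OF h]) (use z in simp)
  then have "ln (z - 1) - ln 2 \<le> g1 d z" unfolding g1_def using z by (simp add: ln_div)
  moreover have "ln (z - 1) \<le> 0" using z by simp
  moreover have "0 \<le> ln (2::real)" by simp
  ultimately show ?thesis using g1_neg(1)[OF d z(1)] by auto
qed

lemma g1_bound_b:
  assumes d: "d > 1" and z: "2 < z"
  shows "\<bar>g1 d z\<bar> \<le> \<bar>2 * z powr (-d)\<bar>"
proof -
  have zz: "z \<le> z powr d" using powr_ge_self[of z d] z d by simp
  define y where "y = 1 / z powr d"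
  have y0: "0 \<le> y" unfolding y_def by simp
  have y1: "y \<le> 1/2" unfolding y_def using zz z by (simp add: field_simps)
  have "- y - 2 * y\<^sup>2 \<le> ln (1 - y)" by (rule ln_one_minus_pos_lower_bound[OF y0 y1])
  moreover have "2 * y\<^sup>2 \<le> y" using y0 y1 mult_right_mono[of "2*y" 1 y] by (simp add: power2_eq_square)
  ultimately have "- 2 * y \<le> g1 d z" unfolding g1_def y_def by simp
  moreover have "z powr (-d) = y" unfolding y_def by (simp add: powr_minus_divide)
  ultimately show ?thesis using g1_neg(1)[OF d, of z] z by auto
qed

lemma g1_cont: "d > 1 \<Longrightarrow> continuous_on {1::real<..} (g1 d)"
  unfolding g1_def
  apply (intro continuous_intros ballI)
  using g1_neg(2)[of d] by force+

lemma g1_int: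
  assumes d: "d > 1"
  shows "set_integrable lborel {1::real<..} (g1 d)"
proof -
  have meas: "set_borel_measurable lborel A (g1 d)" if "A \<subseteq> {1<..}" "A \<in> sets borel" for A
    using set_measurable_continuous_on[of A "g1 d"] continuous_on_subset[OF g1_cont[OF d] that(1)] that(2)
    by (simp add: set_borel_measurable_def)
  have a: "set_integrable lborel {1<..<2::real} (g1 d)"
  proof (rule set_integrable_bound[OF dom1a_int meas])
    show "AE x in lborel. x \<in> {1<..<2} \<longrightarrow> norm (g1 d x) \<le> norm (ln 2 - ln (x - 1))"
    proof (intro AE_I2 impI)
      fix x :: real assume "x \<in> {1<..<2}"
      then show "norm (g1 d x) \<le> norm (ln 2 - ln (x - 1))"
        unfolding real_norm_def by (intro g1_bound_a[OF d]) auto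
    qed
  qed auto
  have b: "set_integrable lborel {2::real<..} (g1 d)"
  proof (rule set_integrable_bound[OF dom1b_int[OF d] meas])
    show "AE x in lborel. x \<in> {2<..} \<longrightarrow> norm (g1 d x) \<le> norm (2 * x powr (-d))"
    proof (intro AE_I2 impI)
      fix x :: real assume "x \<in> {2<..}"
      then show "norm (g1 d x) \<le> norm (2 * x powr (-d))"
        unfolding real_norm_def by (intro g1_bound_b[OF d]) auto
    qed
  qed auto
  have "set_integrable lborel ({1<..<2} \<union> {2<..}) (g1 d)"
    by (rule set_integrable_Un[OF a b]) auto
  then show ?thesis
    by (subst (asm) set_integrable_discrete_difference[where X="{2}"]) auto
qed



lemma g0_mono:
  assumes d: "d > 1" and xy: "0 < x" "x \<le> y" "y < 1"
  shows "g0 d y \<le> g0 d x"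
proof -
  have "x powr d \<le> y powr d" using xy d by (intro powr_mono2) auto
  then have a: "1 / y powr d \<le> 1 / x powr d" using xy by (intro divide_left_mono) auto
  have "y powr d < 1" using xy d powr_lt1 by auto
  then have "0 < 1 / y powr d - 1" using xy by (simp add: field_simps)
  then show ?thesis unfolding g0_def using a by (intro ln_mono) auto
qed

lemma g1_mono:
  assumes d: "d > 1" and xy: "1 < x" "x \<le> y"
  shows "g1 d x \<le> g1 d y"
proof -
  have "x powr d \<le> y powr d" using xy d by (intro powr_mono2) auto
  then have a: "1 / y powr d \<le> 1 / x powr d" using xy by (intro divide_left_mono) auto
  show ?thesis unfolding g1_def using a g1_neg(2)[OF d xy(1)] by (intro ln_mono) auto
qed

lemma set_int_const_Ioo: "set_integrable lborel {p<..<q::real} (\<lambda>x. c::real)"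
  using interval_integral_const(1)[of p q c] interval_integral_const(1)[of q p c]
  by (cases "p \<le> q") (auto simp: interval_lebesgue_integrable_def einterval_eq)

lemma LBINT_real_eq: "p \<le> q \<Longrightarrow> (LBINT x=ereal p..ereal q. f x) = (LBINT x:{p<..<q}. f x)"
  by (simp add: interval_lebesgue_integral_def einterval_eq)

lemma piece_le:
  fixes f :: "real \<Rightarrow> real"
  assumes "p \<le> q" "set_integrable lborel {p<..<q} f" "\<And>x. p < x \<Longrightarrow> x < q \<Longrightarrow> f x \<le> c"
  shows "(LBINT x=ereal p..ereal q. f x) \<le> c * (q - p)"
proof -
  have "(LBINT x:{p<..<q}. f x) \<le> (LBINT x:{p<..<q}. c)"
    using assms by (intro set_integral_mono set_int_const_Ioo) auto
  also have "\<dots> = (LBINT x=ereal p..ereal q. c)" using LBINT_real_eq[of p q "\<lambda>x. c"] assms(1) by simp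
  also have "\<dots> = c * (q - p)" by simp
  finally show ?thesis using LBINT_real_eq[of p q f] assms(1) by simp
qed

lemma piece_ge:
  fixes f :: "real \<Rightarrow> real"
  assumes "p \<le> q" "set_integrable lborel {p<..<q} f" "\<And>x. p < x \<Longrightarrow> x < q \<Longrightarrow> c \<le> f x"
  shows "c * (q - p) \<le> (LBINT x=ereal p..ereal q. f x)"
proof -
  have "(LBINT x:{p<..<q}. c) \<le> (LBINT x:{p<..<q}. f x)"
    using assms by (intro set_integral_mono set_int_const_Ioo) auto
  moreover have "(LBINT x:{p<..<q}. c) = (LBINT x=ereal p..ereal q. c)" using LBINT_real_eq[of p q "\<lambda>x. c"] assms(1) by simp
  moreover have "(LBINT x=ereal p..ereal q. c) = c * (q - p)" by simp
  ultimately show ?thesis using LBINT_real_eq[of p q f] assms(1) by simp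
qed

lemma ilint_sub:
  fixes f :: "real \<Rightarrow> real"
  assumes "set_integrable lborel S f" "a \<le> b" "{a<..<b} \<subseteq> S"
  shows "interval_lebesgue_integrable lborel (ereal a) (ereal b) f"
  using assms unfolding interval_lebesgue_integrable_def einterval_eq
  by (auto intro: set_integrable_subset)

lemma sum_g0_lower:
  fixes n j :: nat
  assumes d: "d > 1" and n: "n \<ge> 1" and j: "1 \<le> j" "j \<le> n"
  shows "(LBINT x=ereal (1/n)..ereal (j/n). g0 d x) \<le> (\<Sum>m\<in>{1..<j}. g0 d (m/n) / n)"
  using j
proof (induction j rule: dec_induct)
  case base then show ?case by simp
next
  case (step j)
  have jn: "real j < real n" "1 \<le> real j" using step by auto
  have np: "(0::real) < n" using n by simp
  have le1: "real (Suc j) / n \<le> 1" using step np by (simp add: field_simps)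
  have le1': "(1 + real j) / n \<le> 1" using le1 by simp
  have pos: "0 < 1 / real n" using np by simp
  have "(LBINT x=ereal (1/n)..ereal (Suc j/n). g0 d x) =
        (LBINT x=ereal (1/n)..ereal (j/n). g0 d x) + (LBINT x=ereal (j/n)..ereal (Suc j/n). g0 d x)"
  proof (rule interval_integral_sum[symmetric])
    have o: "1/n \<le> j/n" "j/n \<le> Suc j / n" using jn np by (auto simp: divide_right_mono)
    have "interval_lebesgue_integrable lborel (ereal (1/n)) (ereal (Suc j/n)) (g0 d)"
    proof (rule ilint_sub[OF g0_int[OF d]])
      show "1/n \<le> Suc j / n" using o by linarith
      show "{1/n<..<Suc j / n} \<subseteq> {0<..<1}"
        by (subst greaterThanLessThan_subseteq_greaterThanLessThan) (use pos le1 in linarith)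
    qed
    then show "interval_lebesgue_integrable lborel (min (ereal (1/n)) (min (ereal (j/n)) (ereal (Suc j/n))))
        (max (ereal (1/n)) (max (ereal (j/n)) (ereal (Suc j/n)))) (g0 d)"
      using o by (simp add: min_absorb1 min_absorb2 max_absorb1 max_absorb2)
  qed
  also have "(LBINT x=ereal (j/n)..ereal (Suc j/n). g0 d x) \<le> g0 d (j/n) * (Suc j / n - j / n)"
  proof (rule piece_le)
    show "j/n \<le> Suc j/n" using np by (simp add: divide_right_mono)
    have "0 \<le> j/n" using np by simp
    then show "set_integrable lborel {j/n<..<Suc j/n} (g0 d)"
      by (intro set_integrable_subset[OF g0_int[OF d]], simp,
          subst greaterThanLessThan_subseteq_greaterThanLessThan) (use le1 in linarith)
    fix x assume "j/n < x" "x < Suc j/n"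
    moreover have "0 < j/n" using np jn by simp
    ultimately show "g0 d x \<le> g0 d (j/n)" using le1 by (intro g0_mono[OF d]) linarith+
  qed
  also have "g0 d (j/n) * (Suc j / n - j / n) = g0 d (j/n) / n" using np by (simp add: field_simps)
  finally show ?case using step by simp
qed

lemma sum_g0_upper:
  fixes n j :: nat
  assumes d: "d > 1" and n: "n \<ge> 1" and j: "1 \<le> j" "j \<le> n"
  shows "(\<Sum>m\<in>{1..<j}. g0 d (m/n) / n) \<le> (LBINT x=ereal 0..ereal ((j - 1)/n). g0 d x)"
  using j
proof (induction j rule: dec_induct)
  case base then show ?case by simp
next
  case (step j)
  have jn: "real j < real n" "1 \<le> real j" using step by auto
  have np: "(0::real) < n" using n by simp
  have le1: "real j / n < 1" using step np by (simp add: field_simps)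
  have e: "real (Suc j - 1) = real j" "real (j - 1) = real j - 1" "real (j - Suc 0) = real j - 1" using jn by auto
  have "(LBINT x=ereal 0..ereal (j/n). g0 d x) =
        (LBINT x=ereal 0..ereal ((j - 1)/n). g0 d x) + (LBINT x=ereal ((j-1)/n)..ereal (j/n). g0 d x)"
  proof (rule interval_integral_sum[symmetric])
    have o: "0 \<le> (j-1)/n" "(j-1)/n \<le> j / n" using jn np by (auto simp: divide_right_mono)
    have "interval_lebesgue_integrable lborel (ereal 0) (ereal (j/n)) (g0 d)"
    proof (rule ilint_sub[OF g0_int[OF d]])
      show "0 \<le> j / n" using o by linarith
      show "{0<..<j / n} \<subseteq> {0<..<1}"
        by (subst greaterThanLessThan_subseteq_greaterThanLessThan) (use le1 in linarith)
    qed
    then show "interval_lebesgue_integrable lborel (min (ereal 0) (min (ereal ((j-1)/n)) (ereal (j/n))))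
        (max (ereal 0) (max (ereal ((j-1)/n)) (ereal (j/n)))) (g0 d)"
      using o by (simp add: min_absorb1 min_absorb2 max_absorb1 max_absorb2)
  qed
  moreover have "g0 d (j/n) * (j / n - (j-1) / n) \<le> (LBINT x=ereal ((j-1)/n)..ereal (j/n). g0 d x)"
  proof (rule piece_ge)
    show "(j-1)/n \<le> j/n" using np by (simp add: divide_right_mono)
    have "0 \<le> (j-1)/n" using jn np by simp
    then show "set_integrable lborel {(j-1)/n<..<j/n} (g0 d)"
      by (intro set_integrable_subset[OF g0_int[OF d]], simp,
          subst greaterThanLessThan_subseteq_greaterThanLessThan) (use le1 in linarith)
    fix x assume "(j-1)/n < x" "x < j/n"
    moreover have "0 \<le> (j-1)/n" using jn np by simp
    ultimately show "g0 d (j/n) \<le> g0 d x" using le1 by (intro g0_mono[OF d]) linarith+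
  qed
  moreover have "g0 d (j/n) * (j / n - (j-1) / n) = g0 d (j/n) / n" using np by (simp add: e field_simps)
  ultimately show ?case using step by (simp add: e)
qed



lemma g1_sub_int:
  assumes d: "d > 1" and "1 \<le> p" "p \<le> q"
  shows "interval_lebesgue_integrable lborel (ereal p) (ereal q) (g1 d)"
    "set_integrable lborel {p<..<q} (g1 d)"
proof -
  show "set_integrable lborel {p<..<q} (g1 d)"
    by (rule set_integrable_subset[OF g1_int[OF d]]) (use assms in auto)
  then show "interval_lebesgue_integrable lborel (ereal p) (ereal q) (g1 d)"
    using assms unfolding interval_lebesgue_integrable_def einterval_eq by auto
qed

lemma sum_g1_lower_aux:
  fixes n K :: nat
  assumes d: "d > 1" and n: "n \<ge> 1"
  shows "(LBINT x=ereal 1..ereal ((n + K)/n). g1 d x) \<le> (\<Sum>k<K. g1 d (real (n + Suc k) / n) / n)"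
proof (induction K)
  case 0
  have "real (n + 0) / n = 1" using n by simp
  then show ?case by simp
next
  case (Suc K)
  have np: "(0::real) < n" using n by simp
  have o: "1 \<le> real (n + K) / n" "real (n + K) / n \<le> real (n + Suc K) / n"
    using np by (auto simp: field_simps)
  have "(LBINT x=ereal 1..ereal ((n + Suc K)/n). g1 d x) =
        (LBINT x=ereal 1..ereal ((n + K)/n). g1 d x) + (LBINT x=ereal ((n + K)/n)..ereal ((n + Suc K)/n). g1 d x)"
  proof (rule interval_integral_sum[symmetric])
    have "interval_lebesgue_integrable lborel (ereal 1) (ereal ((n + Suc K)/n)) (g1 d)"
      by (rule g1_sub_int[OF d]) (use o in linarith)+
    then show "interval_lebesgue_integrable lborel (min (ereal 1) (min (ereal ((n + K)/n)) (ereal ((n + Suc K)/n))))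
        (max (ereal 1) (max (ereal ((n + K)/n)) (ereal ((n + Suc K)/n)))) (g1 d)"
      using o by (simp add: min_absorb1 min_absorb2 max_absorb1 max_absorb2)
  qed
  also have "(LBINT x=ereal ((n + K)/n)..ereal ((n + Suc K)/n). g1 d x) \<le> g1 d ((n + Suc K)/n) * ((n + Suc K)/n - (n + K)/n)"
  proof (rule piece_le)
    show "real (n + K) / n \<le> real (n + Suc K) / n" by fact
    show "set_integrable lborel {real (n + K)/n<..<real (n + Suc K)/n} (g1 d)"
      by (rule g1_sub_int[OF d]) (use o in linarith)+
    fix x assume "real (n + K)/n < x" "x < real (n + Suc K)/n"
    then show "g1 d x \<le> g1 d (real (n + Suc K)/n)" using o by (intro g1_mono[OF d]) linarith+
  qed
  also have "g1 d ((n + Suc K)/n) * ((n + Suc K)/n - (n + K)/n) = g1 d ((n + Suc K)/n) / n"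
    using np by (simp add: field_simps)
  finally show ?case using Suc by simp
qed

lemma sum_g1_upper_aux:
  fixes n K :: nat
  assumes d: "d > 1" and n: "n \<ge> 1"
  shows "(\<Sum>k<K. g1 d (real (n + Suc k) / n) / n) \<le> (LBINT x=ereal ((n + 1)/n)..ereal ((n + 1 + K)/n). g1 d x)"
proof (induction K)
  case 0
  then show ?case by simp
next
  case (Suc K)
  have np: "(0::real) < n" using n by simp
  have o: "1 \<le> real (n + 1) / n" "real (n + 1) / n \<le> real (n + 1 + K) / n" "real (n + 1 + K) / n \<le> real (n + 1 + Suc K) / n"
    using np by (auto simp: field_simps)
  have "(LBINT x=ereal ((n + 1)/n)..ereal ((n + 1 + Suc K)/n). g1 d x) =
        (LBINT x=ereal ((n + 1)/n)..ereal ((n + 1 + K)/n). g1 d x) + (LBINT x=ereal ((n + 1 + K)/n)..ereal ((n + 1 + Suc K)/n). g1 d x)"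
  proof (rule interval_integral_sum[symmetric])
    have "interval_lebesgue_integrable lborel (ereal ((n + 1)/n)) (ereal ((n + 1 + Suc K)/n)) (g1 d)"
      by (rule g1_sub_int[OF d]) (use o in linarith)+
    then show "interval_lebesgue_integrable lborel (min (ereal ((n + 1)/n)) (min (ereal ((n + 1 + K)/n)) (ereal ((n + 1 + Suc K)/n))))
        (max (ereal ((n + 1)/n)) (max (ereal ((n + 1 + K)/n)) (ereal ((n + 1 + Suc K)/n)))) (g1 d)"
      using o by (simp add: min_absorb1 min_absorb2 max_absorb1 max_absorb2)
  qed
  moreover have "g1 d ((n + Suc K)/n) * ((n + 1 + Suc K)/n - (n + 1 + K)/n) \<le> (LBINT x=ereal ((n + 1 + K)/n)..ereal ((n + 1 + Suc K)/n). g1 d x)"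
  proof (rule piece_ge)
    show "real (n + 1 + K) / n \<le> real (n + 1 + Suc K) / n" by fact
    show "set_integrable lborel {real (n + 1 + K)/n<..<real (n + 1 + Suc K)/n} (g1 d)"
      by (rule g1_sub_int[OF d]) (use o in linarith)+
    fix x assume "real (n + 1 + K)/n < x" "x < real (n + 1 + Suc K)/n"
    moreover have "real (n + Suc K) / n = real (n + 1 + K) / n" by simp
    moreover have "1 < real (n + 1) / n" using np by (simp add: field_simps)
    ultimately show "g1 d (real (n + Suc K)/n) \<le> g1 d x" using o by (intro g1_mono[OF d]) linarith+
  qed
  moreover have "g1 d ((n + Suc K)/n) * ((n + 1 + Suc K)/n - (n + 1 + K)/n) = g1 d ((n + Suc K)/n) / n"
    using np by (simp add: field_simps)
  ultimately show ?case using Suc by simp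
qed



lemma I1_le_partial:
  fixes n K :: nat
  assumes d: "d > 1" and n: "n \<ge> 1"
  shows "(LBINT z:{1<..}. g1 d z) \<le> (\<Sum>k<K. g1 d (real (n + Suc k) / n) / n)"
proof -
  have np: "(0::real) < n" using n by simp
  have o: "1 \<le> real (n + K) / n" using np by (simp add: field_simps)
  have int: "interval_lebesgue_integrable lborel (ereal 1) \<infinity> (g1 d)"
    using g1_int[OF d] by (simp add: interval_integrable_to_infinity_eq)
  have "(LBINT z:{1<..}. g1 d z) = (LBINT x=ereal 1..\<infinity>. g1 d x)"
    by (simp add: interval_integral_to_infinity_eq)
  also have "\<dots> = (LBINT x=ereal 1..ereal ((n + K)/n). g1 d x) + (LBINT x=ereal ((n + K)/n)..\<infinity>. g1 d x)"
    by (rule interval_integral_sum[symmetric]) (use int o in \<open>simp add: min_absorb1 min_absorb2 max_absorb1 max_absorb2\<close>)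
  also have "(LBINT x=ereal ((n + K)/n)..\<infinity>. g1 d x) \<le> 0"
  proof -
    have "(LBINT x=ereal ((n + K)/n)..\<infinity>. g1 d x) = (LBINT x:{real (n + K)/n<..}. g1 d x)"
      by (simp add: interval_integral_to_infinity_eq)
    also have "\<dots> \<le> (LBINT x:{real (n + K)/n<..}. (0::real))"
    proof (rule set_integral_mono)
      show "set_integrable lborel {real (n + K) / real n<..} (g1 d)"
        by (rule set_integrable_subset[OF g1_int[OF d]]) (use o in auto)
      show "set_integrable lborel {real (n + K) / real n<..} (\<lambda>x. 0::real)"
        by (simp add: set_integrable_def)
      fix x assume "x \<in> {real (n + K) / real n<..}"
      then show "g1 d x \<le> 0" using g1_neg(1)[OF d, of x] o by auto
    qed
    finally show ?thesis by simp
  qed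
  finally show ?thesis using sum_g1_lower_aux[OF d n, of K] by linarith
qed

lemma sum_g1:
  fixes n :: nat
  assumes d: "d > 1" and n: "n \<ge> 1"
  shows "summable (\<lambda>k. g1 d (real (n + Suc k) / n) / n)"
    "(LBINT z:{1<..}. g1 d z) \<le> (\<Sum>k. g1 d (real (n + Suc k) / n) / n)"
    "(\<Sum>k. g1 d (real (n + Suc k) / n) / n) \<le> (LBINT z:{real (n + 1)/n<..}. g1 d z)"
proof -
  define t where "t = (\<lambda>k. g1 d (real (n + Suc k) / n) / n)"
  have np: "(0::real) < n" using n by simp
  have tneg: "t k \<le> 0" for k
  proof -
    have "1 < real (n + Suc k) / n" using np by (simp add: field_simps)
    then show ?thesis unfolding t_def using g1_neg(1)[OF d] np by (simp add: divide_nonpos_pos less_imp_le)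
  qed
  have "summable (\<lambda>k. - t k)"
  proof (rule summableI_nonneg_bounded[where x = "- (LBINT z:{1<..}. g1 d z)"])
    show "0 \<le> - t k" for k using tneg[of k] by simp
    show "sum (\<lambda>k. - t k) {..<K} \<le> - (LBINT z:{1<..}. g1 d z)" for K
      using I1_le_partial[OF d n, of K] by (simp add: sum_negf t_def)
  qed
  then have s: "summable t" using summable_minus_iff by blast
  then show "summable (\<lambda>k. g1 d (real (n + Suc k) / n) / n)" unfolding t_def by simp
  have L: "(\<lambda>K. sum t {..<K}) \<longlonglongrightarrow> suminf t" using s by (rule summable_LIMSEQ)
  show "(LBINT z:{1<..}. g1 d z) \<le> (\<Sum>k. g1 d (real (n + Suc k) / n) / n)"
    unfolding t_def[symmetric] using I1_le_partial[OF d n] unfolding t_def[symmetric]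
    by (intro LIMSEQ_le_const[OF L]) auto
  define A where "A K = {real (n + 1)/n<..<real (n + 1 + K)/n}" for K
  have UA: "(\<Union>K. A K) = {real (n + 1)/n<..}"
  proof (intro equalityI subsetI)
    fix x assume "x \<in> (\<Union>K. A K)" then obtain K where "x \<in> A K" by blast
    then show "x \<in> {real (n + 1)/n<..}" unfolding A_def by auto
  next
    fix x assume x: "x \<in> {real (n + 1)/n<..}"
    obtain K :: nat where K: "x * n < K" using reals_Archimedean2 by blast
    have "x < real (n + 1 + K) / n" using K np by (simp add: field_simps)
    then show "x \<in> (\<Union>K. A K)" using x unfolding A_def by auto
  qed
  have incA: "incseq A" unfolding incseq_def
  proof (intro allI impI)
    fix m m' :: nat assume "m \<le> m'"
    then have "real (n + 1 + m) / n \<le> real (n + 1 + m') / n" using np by (intro divide_right_mono) auto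
    then show "A m \<subseteq> A m'" unfolding A_def
      by (subst greaterThanLessThan_subseteq_greaterThanLessThan) linarith
  qed
  have "(\<lambda>K. LBINT z:A K. g1 d z) \<longlonglongrightarrow> (LBINT z:(\<Union>K. A K). g1 d z)"
  proof (rule set_integral_cont_up[OF _ incA])
    show "A K \<in> sets lborel" for K unfolding A_def by simp
    show "set_integrable lborel (\<Union>K. A K) (g1 d)" unfolding UA
      by (rule set_integrable_subset[OF g1_int[OF d]]) (use np in \<open>auto simp: field_simps\<close>)
  qed
  then have L2: "(\<lambda>K. LBINT z:A K. g1 d z) \<longlonglongrightarrow> (LBINT z:{real (n + 1)/n<..}. g1 d z)" unfolding UA .
  have "sum t {..<K} \<le> (LBINT z:A K. g1 d z)" for K
  proof -
    have "real (n + 1) / n \<le> real (n + 1 + K) / n" using np by (simp add: divide_right_mono)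
    then show ?thesis using sum_g1_upper_aux[OF d n, of K] unfolding A_def t_def
      by (simp add: LBINT_real_eq)
  qed
  then show "(\<Sum>k. g1 d (real (n + Suc k) / n) / n) \<le> (LBINT z:{real (n + 1)/n<..}. g1 d z)"
    unfolding t_def[symmetric] by (intro LIMSEQ_le[OF L L2]) auto
qed



lemma lim_E:
  assumes d: "d > 1"
  shows "(\<lambda>n. LBINT z:{1/real n<..<1}. g0 d z) \<longlonglongrightarrow> (LBINT z:{0<..<1}. g0 d z)"
proof -
  define A where "A i = {1/real (Suc i)<..<(1::real)}" for i
  have UA: "(\<Union>i. A i) = {0<..<1}"
  proof (intro equalityI subsetI)
    fix x assume "x \<in> (\<Union>i. A i)" then obtain i where "x \<in> A i" by blast
    then have "1/real (Suc i) < x" "x < 1" unfolding A_def greaterThanLessThan_iff by auto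
    moreover have "0 < 1/real (Suc i)" by simp
    ultimately show "x \<in> {0<..<1}" unfolding greaterThanLessThan_iff by linarith
  next
    fix x :: real assume x: "x \<in> {0<..<1}"
    then obtain i where "inverse (real (Suc i)) < x" using reals_Archimedean[of x] x by auto
    then show "x \<in> (\<Union>i. A i)" using x unfolding A_def by (auto simp: field_simps)
  qed
  have incA: "incseq A" unfolding incseq_def
  proof (intro allI impI)
    fix m m' :: nat assume "m \<le> m'"
    then have "1/real (Suc m') \<le> 1/real (Suc m)" by (intro divide_left_mono) auto
    then show "A m \<subseteq> A m'" unfolding A_def
      by (subst greaterThanLessThan_subseteq_greaterThanLessThan) linarith
  qed
  have lim0: "(\<lambda>i. LBINT z:A i. g0 d z) \<longlonglongrightarrow> (LBINT z:(\<Union>i. A i). g0 d z)"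
  proof (rule set_integral_cont_up[OF _ incA])
    show "A i \<in> sets lborel" for i unfolding A_def by simp
    show "set_integrable lborel (\<Union>i. A i) (g0 d)" unfolding UA by (rule g0_int[OF d])
  qed
  from lim0[unfolded UA] have "(\<lambda>i. LBINT z:{1/real (Suc i)<..<1}. g0 d z) \<longlonglongrightarrow> (LBINT z:{0<..<1}. g0 d z)"
    by (simp add: A_def)
  then show ?thesis by (rule LIMSEQ_imp_Suc)
qed

lemma lim_F:
  assumes d: "d > 1"
  shows "(\<lambda>n. LBINT z:{0<..<real (n - 1)/real n}. g0 d z) \<longlonglongrightarrow> (LBINT z:{0<..<1}. g0 d z)"
proof -
  define A where "A i = {0<..<real i/real (Suc i)}" for i
  have Ale: "real i/real (Suc i) < 1" for i by simp
  have UA: "(\<Union>i. A i) = {0<..<1}"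
  proof (intro equalityI subsetI)
    fix x assume "x \<in> (\<Union>i. A i)" then obtain i where "x \<in> A i" by blast
    then have "0 < x" "x < real i/real (Suc i)" unfolding A_def greaterThanLessThan_iff by auto
    then show "x \<in> {0<..<1}" unfolding greaterThanLessThan_iff using Ale[of i] by linarith
  next
    fix x :: real assume x: "x \<in> {0<..<1}"
    then obtain i where i: "inverse (real (Suc i)) < 1 - x" using reals_Archimedean[of "1 - x"] x by auto
    have "real i / real (Suc i) = 1 - inverse (real (Suc i))" by (simp add: field_simps)
    then have "x < real i / real (Suc i)" using i by linarith
    then have "x \<in> A i" using x unfolding A_def by simp
    then show "x \<in> (\<Union>i. A i)" by blast
  qed
  have incA: "incseq A" unfolding incseq_def
  proof (intro allI impI)
    fix m m' :: nat assume "m \<le> m'"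
    have e: "real k / real (Suc k) = 1 - 1 / real (Suc k)" for k by (simp add: field_simps)
    have "1/real (Suc m') \<le> 1/real (Suc m)" using \<open>m \<le> m'\<close> by (intro divide_left_mono) auto
    then have "real m / real (Suc m) \<le> real m' / real (Suc m')" unfolding e by linarith
    then show "A m \<subseteq> A m'" unfolding A_def
      by (subst greaterThanLessThan_subseteq_greaterThanLessThan) linarith
  qed
  have lim0: "(\<lambda>i. LBINT z:A i. g0 d z) \<longlonglongrightarrow> (LBINT z:(\<Union>i. A i). g0 d z)"
  proof (rule set_integral_cont_up[OF _ incA])
    show "A i \<in> sets lborel" for i unfolding A_def by simp
    show "set_integrable lborel (\<Union>i. A i) (g0 d)" unfolding UA by (rule g0_int[OF d])
  qed
  from lim0[unfolded UA] have "(\<lambda>i. LBINT z:{0<..<real i/real (Suc i)}. g0 d z) \<longlonglongrightarrow> (LBINT z:{0<..<1}. g0 d z)"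
    by (simp add: A_def)
  moreover have E: "real (Suc i - 1) / real (Suc i) = real i / real (Suc i)" for i by simp
  ultimately show ?thesis apply - by (rule LIMSEQ_imp_Suc) (simp only: E)
qed

lemma lim_G:
  assumes d: "d > 1"
  shows "(\<lambda>n. LBINT z:{real (n + 1)/real n<..}. g1 d z) \<longlonglongrightarrow> (LBINT z:{1<..}. g1 d z)"
proof -
  define A where "A i = {1 + 1/real (Suc i)<..}" for i
  have UA: "(\<Union>i. A i) = {1<..}"
  proof (intro equalityI subsetI)
    fix x assume "x \<in> (\<Union>i. A i)" then obtain i where "x \<in> A i" by blast
    then have "1 + 1/real (Suc i) < x" unfolding A_def greaterThan_iff by auto
    moreover have "0 < 1/real (Suc i)" by simp
    ultimately show "x \<in> {1<..}" unfolding greaterThan_iff by linarith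
  next
    fix x :: real assume x: "x \<in> {1<..}"
    then obtain i where "inverse (real (Suc i)) < x - 1" using reals_Archimedean[of "x - 1"] x by auto
    then show "x \<in> (\<Union>i. A i)" using x unfolding A_def by (auto simp: field_simps)
  qed
  have incA: "incseq A" unfolding incseq_def
  proof (intro allI impI)
    fix m m' :: nat assume "m \<le> m'"
    then have "1/real (Suc m') \<le> 1/real (Suc m)" by (intro divide_left_mono) auto
    then show "A m \<subseteq> A m'" unfolding A_def by auto
  qed
  have lim0: "(\<lambda>i. LBINT z:A i. g1 d z) \<longlonglongrightarrow> (LBINT z:(\<Union>i. A i). g1 d z)"
  proof (rule set_integral_cont_up[OF _ incA])
    show "A i \<in> sets lborel" for i unfolding A_def by simp
    show "set_integrable lborel (\<Union>i. A i) (g1 d)" unfolding UA by (rule g1_int[OF d])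
  qed
  from lim0[unfolded UA] have "(\<lambda>i. LBINT z:{1 + 1/real (Suc i)<..}. g1 d z) \<longlonglongrightarrow> (LBINT z:{1<..}. g1 d z)"
    by (simp add: A_def)
  moreover have E: "real (Suc i + 1) / real (Suc i) = 1 + 1/real (Suc i)" for i
    by (simp add: field_simps)
  ultimately show ?thesis apply - by (rule LIMSEQ_imp_Suc) (simp only: E)
qed



lemma inv_ratio_powr: "0 < m \<Longrightarrow> 0 < n \<Longrightarrow> 1 / (m / n) powr d = n powr d / m powr (d::real)"
  by (simp add: powr_divide)

lemma ratio_le: 
  fixes an am m n d :: real
  assumes "0 < an" "0 < m" "0 < n" "m powr d * am \<le> n powr d * an"
  shows "am / an \<le> 1 / (m / n) powr d"
proof -
  have p: "0 < m powr d" using assms(2) by simp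
  have "am / an \<le> n powr d / m powr d"
    using assms p by (simp add: field_simps)
  then show ?thesis using inv_ratio_powr[of m n d] assms by simp
qed

lemma ratio_ge: 
  fixes an am m n d :: real
  assumes "0 < an" "0 < m" "0 < n" "n powr d * an \<le> m powr d * am"
  shows "1 / (m / n) powr d \<le> am / an"
proof -
  have p: "0 < m powr d" using assms(2) by simp
  have "n powr d / m powr d \<le> am / an"
    using assms p by (simp add: field_simps)
  then show ?thesis using inv_ratio_powr[of m n d] assms by simp
qed

lemma t0_le:
  fixes an am m n d :: real
  assumes "0 < an" "an < am" "0 < m" "m < n" "m powr d * am \<le> n powr d * an"
  shows "ln \<bar>1 - am / an\<bar> \<le> g0 d (m / n)"
proof -
  have r: "1 < am / an" using assms by simp
  have "am / an \<le> 1 / (m / n) powr d" using ratio_le[of an m n d am] assms by simp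
  then have "\<bar>1 - am / an\<bar> \<le> 1 / (m / n) powr d - 1" using r by simp
  moreover have "0 < \<bar>1 - am / an\<bar>" using r by simp
  ultimately show ?thesis unfolding g0_def by (rule ln_mono)
qed

lemma t0_ge:
  fixes an am m n d :: real
  assumes d: "0 < d" and "0 < an" "an < am" "0 < m" "m < n" "n powr d * an \<le> m powr d * am"
  shows "g0 d (m / n) \<le> ln \<bar>1 - am / an\<bar>"
proof -
  have r: "1 < am / an" using assms by simp
  have "1 / (m / n) powr d \<le> am / an" using ratio_ge[of an m n d am] assms by simp
  then have "1 / (m / n) powr d - 1 \<le> \<bar>1 - am / an\<bar>" using r by simp
  moreover have "0 < 1 / (m / n) powr d - 1"
  proof -
    have "(m / n) powr d < 1" using assms by (intro powr_lt1) auto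
    moreover have "0 < (m / n) powr d" using assms by simp
    ultimately show ?thesis by (simp add: field_simps)
  qed
  ultimately show ?thesis unfolding g0_def by (rule ln_mono)
qed

lemma t1_le:
  fixes an am m n d :: real
  assumes d: "0 < d" and "0 < am" "am < an" "0 < n" "n < m" "n powr d * an \<le> m powr d * am"
  shows "- g1 d (m / n) \<le> - ln \<bar>1 - am / an\<bar>"
proof -
  have r: "am / an < 1" "0 < am / an" using assms by auto
  have "1 / (m / n) powr d \<le> am / an" using ratio_ge[of an m n d am] assms by simp
  then have "\<bar>1 - am / an\<bar> \<le> 1 - 1 / (m / n) powr d" using r by simp
  moreover have "0 < \<bar>1 - am / an\<bar>" using r by simp
  ultimately have "ln \<bar>1 - am / an\<bar> \<le> g1 d (m / n)" unfolding g1_def by (rule ln_mono)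
  then show ?thesis by simp
qed

lemma t1_ge:
  fixes an am m n d :: real
  assumes d: "1 < d" and "0 < am" "am < an" "0 < n" "n < m" "m powr d * am \<le> n powr d * an"
  shows "- ln \<bar>1 - am / an\<bar> \<le> - g1 d (m / n)"
proof -
  have r: "am / an < 1" "0 < am / an" using assms by auto
  have "am / an \<le> 1 / (m / n) powr d" using ratio_le[of an m n d am] assms by simp
  then have "1 - 1 / (m / n) powr d \<le> \<bar>1 - am / an\<bar>" using r by simp
  moreover have "0 < 1 - 1 / (m / n) powr d" using g1_neg(2)[OF d, of "m/n"] assms by simp
  ultimately have "g1 d (m / n) \<le> ln \<bar>1 - am / an\<bar>" unfolding g1_def by (rule ln_mono)
  then show ?thesis by simp
qed



lemma dec_strict:
  fixes a :: "nat \<Rightarrow> real"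
  assumes decr: "\<forall>n\<ge>1. a (Suc n) < a n" and m: "1 \<le> m" "m < n"
  shows "a n < a m"
  using m(2)
proof (induction n)
  case 0 then show ?case by simp
next
  case (Suc n)
  show ?case
  proof (cases "m = n")
    case True then show ?thesis using decr m by auto
  next
    case False
    then have mn: "m < n" using Suc by simp
    then have "a n < a m" using Suc.IH by simp
    moreover have "a (Suc n) < a n" using decr mn m(1) by simp
    ultimately show ?thesis by simp
  qed
qed

lemma g0_nonneg_small:
  fixes m n :: nat
  assumes d: "d > 1" and m: "1 \<le> m" "2 * m \<le> n"
  shows "0 \<le> g0 d (m / n)"
proof -
  have np: "(0::real) < n" using m by simp
  have x: "0 < real m / n" "real m / n \<le> 1/2" using m np by (auto simp: field_simps)
  have x1: "real m / n \<le> 1" using x by linarith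
  have "(real m / n) powr d \<le> (real m / n) powr 1"
    using x x1 d by (intro powr_mono') auto
  moreover have "(real m / n) powr 1 = real m / n" using x by simp
  ultimately have "(real m / n) powr d \<le> 1/2" using x(2) by linarith
  moreover have "0 < (real m / n) powr d" using x m np by simp
  ultimately have "1 \<le> 1 / (real m / n) powr d - 1" by (simp add: field_simps)
  then show ?thesis unfolding g0_def by simp
qed

lemma g0_le_dln:
  fixes m n :: nat
  assumes d: "d > 1" and m: "1 \<le> m" "m < n"
  shows "g0 d (m / n) \<le> d * ln n"
proof -
  have np: "(0::real) < n" using m by simp
  have x: "0 < real m / n" "real m / n < 1" using m np by (auto simp: field_simps)
  have p: "0 < (real m / n) powr d" "(real m / n) powr d < 1" using x d powr_lt1[of "real m / n" d] m np by auto
  have "0 < 1 / (real m / n) powr d - 1" using p by (simp add: field_simps)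
  then have "g0 d (m / n) \<le> ln (1 / (real m / n) powr d)" unfolding g0_def by (intro ln_mono) auto
  also have "1 / (real m / n) powr d = real n powr d / real m powr d"
    using inv_ratio_powr[of "real m" "real n" d] m by simp
  also have "\<dots> \<le> real n powr d"
  proof -
    have "1 \<le> real m powr d" using m d by (simp add: ge_one_powr_ge_zero)
    then show ?thesis by (simp add: divide_le_eq mult_le_cancel_left1 less_le_trans[OF zero_less_one])
  qed
  then have "ln (real n powr d / real m powr d) \<le> ln (real n powr d)" using m by (intro ln_mono) auto
  also have "ln (real n powr d) = d * ln n" using np by (simp add: ln_powr)
  finally show ?thesis .
qed



lemma sum_if_le:
  fixes K :: real and N n :: nat
  assumes "0 \<le> K"
  shows "(\<Sum>m\<in>{1..<n}. if m < N then K else 0) \<le> real N * K"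
proof -
  have "(\<Sum>m\<in>{1..<n}. if m < N then K else 0) = (\<Sum>m\<in>{m\<in>{1..<n}. m < N}. K)"
    by (rule sum.inter_filter[symmetric]) simp
  also have "\<dots> = real (card {m\<in>{1..<n}. m < N}) * K" by simp
  also have "card {m\<in>{1..<n}. m < N} \<le> card {..<N}" by (rule card_mono) auto
  then have "real (card {m\<in>{1..<n}. m < N}) * K \<le> real N * K"
    using assms by (intro mult_right_mono) auto
  finally show ?thesis .
qed

lemma part1_bound:
  fixes a :: "nat \<Rightarrow> real" and N n :: nat
  assumes pos: "\<forall>n\<ge>1. a n > 0" and decr: "\<forall>n\<ge>1. a (Suc n) < a n" and d: "d > 1" and N1: "1 \<le> N"
    and mono: "\<forall>m n. N \<le> m \<longrightarrow> m \<le> n \<longrightarrow> real m powr d * a m \<le> real n powr d * a n"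
    and n: "2 * N \<le> n"
  shows "alpha a n \<le> ereal ((LBINT z:{0<..<real (n - 1)/real n}. g0 d z) + (LBINT z:{real (n + 1)/real n<..}. g1 d z)
            + real N * (\<bar>ln (a 1) - ln (real N powr d * a N)\<bar> + d * ln n) / n)"
proof -
  have n1: "1 \<le> n" "N \<le> n" using n N1 by auto
  have np: "(0::real) < n" using n1 by simp
  define K where "K = \<bar>ln (a 1) - ln (real N powr d * a N)\<bar> + d * ln n"
  have K0: "0 \<le> K" unfolding K_def using d n1 by simp
  define S where "S = (\<Sum>m\<in>{1..<n}. ln \<bar>1 - a m / a n\<bar>)"
  have an: "0 < a n" using pos n1 by simp
  have trm: "ln \<bar>1 - a m / a n\<bar> \<le> g0 d (m / n) + (if m < N then K else 0)" if m: "m \<in> {1..<n}" for m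
  proof -
    have m1: "1 \<le> m" "m < n" using m by auto
    have amn: "a n < a m" using dec_strict[OF decr m1] .
    show ?thesis
    proof (cases "m < N")
      case False
      have "ln \<bar>1 - a m / a n\<bar> \<le> g0 d (real m / real n)"
        by (rule t0_le) (use an amn m1 False mono in auto)
      then show ?thesis using False by simp
    next
      case True
      have am1: "a m \<le> a 1" using m1 dec_strict[OF decr, of 1 m] by (cases "m = 1") auto
      have am0: "0 < a m" using pos m1 by simp
      have r: "1 < a m / a n" using an amn by simp
      have "ln \<bar>1 - a m / a n\<bar> \<le> ln (a m / a n)" using r by (intro ln_mono) auto
      also have "\<dots> = ln (a m) - ln (a n)" using am0 an by (simp add: ln_div)
      also have "\<dots> \<le> ln (a 1) - ln (a n)" using am1 am0 by simp
      also have "\<dots> \<le> K"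
      proof -
        have bN: "real N powr d * a N \<le> real n powr d * a n" using mono n1 by simp
        have aN: "0 < a N" using pos N1 by simp
        have "ln (real N powr d * a N) \<le> ln (real n powr d * a n)" using bN aN N1 by (intro ln_mono) auto
        also have "\<dots> = d * ln n + ln (a n)" using np an by (simp add: ln_mult ln_powr)
        finally show ?thesis unfolding K_def by linarith
      qed
      finally have "ln \<bar>1 - a m / a n\<bar> \<le> K" .
      moreover have "0 \<le> g0 d (real m / real n)" using g0_nonneg_small[OF d m1(1), of n] True n by simp
      ultimately show ?thesis using True by simp
    qed
  qed
  have "S \<le> (\<Sum>m\<in>{1..<n}. g0 d (m / n) + (if m < N then K else 0))"
    unfolding S_def by (intro sum_mono trm)
  also have "\<dots> = (\<Sum>m\<in>{1..<n}. g0 d (m / n)) + (\<Sum>m\<in>{1..<n}. if m < N then K else 0)"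
    by (rule sum.distrib)
  finally have S_le: "S \<le> (\<Sum>m\<in>{1..<n}. g0 d (m / n)) + real N * K" using sum_if_le[OF K0, of N n] by linarith
  define T where "T = (\<Sum>k. ereal (- ln \<bar>1 - a (n + Suc k) / a n\<bar>))"
  have summ: "summable (\<lambda>k. g1 d (real (n + Suc k) / n))"
    using sum_g1(1)[OF d n1(1)] np by simp
  define G where "G = (\<Sum>k. g1 d (real (n + Suc k) / n))"
  have "(\<Sum>k. ereal (- g1 d (real (n + Suc k) / n))) \<le> T" unfolding T_def
  proof (rule suminf_le_pos)
    fix k
    have nk: "1 \<le> n" "n < n + Suc k" using n1 by auto
    have "- g1 d (real (n + Suc k) / real n) \<le> - ln \<bar>1 - a (n + Suc k) / a n\<bar>"
      by (rule t1_le) (use d pos dec_strict[OF decr nk] nk mono[rule_format, of n "n + Suc k"] n1 in auto)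
    then show "ereal (- g1 d (real (n + Suc k) / real n)) \<le> ereal (- ln \<bar>1 - a (n + Suc k) / a n\<bar>)" by simp
    have "1 < real (n + Suc k) / real n" using np by (simp add: field_simps)
    then show "0 \<le> ereal (- g1 d (real (n + Suc k) / real n))" using g1_neg(1)[OF d] by (simp add: less_imp_le)
  qed
  moreover have "(\<Sum>k. ereal (- g1 d (real (n + Suc k) / n))) = ereal (- G)"
    unfolding G_def using suminf_ereal'[OF summable_minus[OF summ]] suminf_minus[OF summ] by simp
  ultimately have TG: "ereal (- G) \<le> T" by simp
  have "alpha a n = ereal (1 / real n) * (ereal S - T)" unfolding alpha_def S_def T_def by simp
  also have "\<dots> \<le> ereal (1 / real n) * (ereal S - ereal (- G))"
    by (intro ereal_mult_left_mono ereal_minus_mono TG) auto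
  also have "\<dots> = ereal ((S + G) / n)" by simp
  also have "(S + G) / n \<le> (LBINT z:{0<..<real (n - 1)/real n}. g0 d z) + (LBINT z:{real (n + 1)/real n<..}. g1 d z)
            + real N * K / n"
  proof -
    have "S / n \<le> (\<Sum>m\<in>{1..<n}. g0 d (m / n)) / n + real N * K / n"
      using S_le np by (simp add: divide_right_mono add_divide_distrib[symmetric])
    also have "(\<Sum>m\<in>{1..<n}. g0 d (m / n)) / n = (\<Sum>m\<in>{1..<n}. g0 d (m / n) / n)"
      by (rule sum_divide_distrib)
    also have "\<dots> \<le> (LBINT x=ereal 0..ereal (real (n - 1)/n). g0 d x)"
      by (rule sum_g0_upper[OF d n1(1) n1(1) order.refl])
    also have "\<dots> = (LBINT z:{0<..<real (n - 1)/real n}. g0 d z)" by (rule LBINT_real_eq) simp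
    finally have 1: "S / n \<le> (LBINT z:{0<..<real (n - 1)/real n}. g0 d z) + real N * K / n" by simp
    have "G / n = (\<Sum>k. g1 d (real (n + Suc k) / n) / n)" unfolding G_def using summ by (rule suminf_divide[symmetric])
    also have "\<dots> \<le> (LBINT z:{real (n + 1)/real n<..}. g1 d z)" by (rule sum_g1(3)[OF d n1(1)])
    finally have 2: "G / n \<le> (LBINT z:{real (n + 1)/real n<..}. g1 d z)" .
    show ?thesis using 1 2 by (simp add: add_divide_distrib)
  qed
  finally show ?thesis unfolding K_def by (simp add: mult.assoc)
qed



lemma part2_bound:
  fixes a :: "nat \<Rightarrow> real" and N n :: nat
  assumes pos: "\<forall>n\<ge>1. a n > 0" and decr: "\<forall>n\<ge>1. a (Suc n) < a n" and d: "d > 1" and N1: "1 \<le> N"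
    and mono: "\<forall>m n. N \<le> m \<longrightarrow> m \<le> n \<longrightarrow> real n powr d * a n \<le> real m powr d * a m"
    and n: "N \<le> n" and small: "a n \<le> a N / 2"
  shows "ereal ((LBINT z:{1/real n<..<1}. g0 d z) + (LBINT z:{1<..}. g1 d z) - real N * (d * ln n) / n) \<le> alpha a n"
proof -
  have n1: "1 \<le> n" using n N1 by auto
  have np: "(0::real) < n" using n1 by simp
  define K where "K = d * ln n"
  have K0: "0 \<le> K" unfolding K_def using d n1 by simp
  define S where "S = (\<Sum>m\<in>{1..<n}. ln \<bar>1 - a m / a n\<bar>)"
  have an: "0 < a n" using pos n1 by simp
  have trm: "g0 d (m / n) - (if m < N then K else 0) \<le> ln \<bar>1 - a m / a n\<bar>" if m: "m \<in> {1..<n}" for m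
  proof -
    have m1: "1 \<le> m" "m < n" using m by auto
    have amn: "a n < a m" using dec_strict[OF decr m1] .
    show ?thesis
    proof (cases "m < N")
      case False
      have "g0 d (real m / real n) \<le> ln \<bar>1 - a m / a n\<bar>"
        by (rule t0_ge) (use d an amn m1 False mono in auto)
      then show ?thesis using False by simp
    next
      case True
      have aNm: "a N < a m" using dec_strict[OF decr m1(1) True] .
      have "2 * a n < a m" using small aNm by simp
      then have "2 < a m / a n" using an by (simp add: field_simps)
      then have "1 \<le> \<bar>1 - a m / a n\<bar>" by simp
      then have "0 \<le> ln \<bar>1 - a m / a n\<bar>" by simp
      moreover have "g0 d (real m / real n) \<le> K" unfolding K_def by (rule g0_le_dln[OF d m1])
      ultimately show ?thesis using True by simp
    qed
  qed
  have "(\<Sum>m\<in>{1..<n}. g0 d (m / n) - (if m < N then K else 0)) \<le> S"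
    unfolding S_def by (intro sum_mono trm)
  moreover have "(\<Sum>m\<in>{1..<n}. g0 d (m / n) - (if m < N then K else 0)) = (\<Sum>m\<in>{1..<n}. g0 d (m / n)) - (\<Sum>m\<in>{1..<n}. if m < N then K else 0)"
    by (rule sum_subtractf)
  ultimately have S_ge: "(\<Sum>m\<in>{1..<n}. g0 d (m / n)) - real N * K \<le> S" using sum_if_le[OF K0, of N n] by linarith
  define T where "T = (\<Sum>k. ereal (- ln \<bar>1 - a (n + Suc k) / a n\<bar>))"
  have summ: "summable (\<lambda>k. g1 d (real (n + Suc k) / n))"
    using sum_g1(1)[OF d n1] np by simp
  define G where "G = (\<Sum>k. g1 d (real (n + Suc k) / n))"
  have "T \<le> (\<Sum>k. ereal (- g1 d (real (n + Suc k) / n)))" unfolding T_def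
  proof (rule suminf_le_pos)
    fix k
    have nk: "1 \<le> n" "n < n + Suc k" using n1 by auto
    have ak: "a (n + Suc k) < a n" "0 < a (n + Suc k)" using dec_strict[OF decr nk] pos by auto
    have "- ln \<bar>1 - a (n + Suc k) / a n\<bar> \<le> - g1 d (real (n + Suc k) / real n)"
      by (rule t1_ge) (use d ak nk mono[rule_format, of n "n + Suc k"] n an in auto)
    then show "ereal (- ln \<bar>1 - a (n + Suc k) / a n\<bar>) \<le> ereal (- g1 d (real (n + Suc k) / real n))" by simp
    have r: "a (n + Suc k) / a n < 1" "0 < a (n + Suc k) / a n" using ak an by auto
    then have "\<bar>1 - a (n + Suc k) / a n\<bar> \<le> 1" "0 < \<bar>1 - a (n + Suc k) / a n\<bar>" by auto
    then have "ln \<bar>1 - a (n + Suc k) / a n\<bar> \<le> 0" by simp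
    then show "0 \<le> ereal (- ln \<bar>1 - a (n + Suc k) / a n\<bar>)" by simp
  qed
  moreover have "(\<Sum>k. ereal (- g1 d (real (n + Suc k) / n))) = ereal (- G)"
    unfolding G_def using suminf_ereal'[OF summable_minus[OF summ]] suminf_minus[OF summ] by simp
  ultimately have TG: "T \<le> ereal (- G)" by simp
  have "(LBINT z:{1/real n<..<1}. g0 d z) + (LBINT z:{1<..}. g1 d z) - real N * K / n \<le> (S + G) / n"
  proof -
    have "(LBINT z:{1/real n<..<1}. g0 d z) = (LBINT x=ereal (1/n)..ereal (real n/n). g0 d x)"
      using np LBINT_real_eq[of "1/real n" 1 "g0 d"] by simp
    also have "\<dots> \<le> (\<Sum>m\<in>{1..<n}. g0 d (m / n) / n)"
      by (rule sum_g0_lower[OF d n1 n1 order.refl])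
    also have "\<dots> = (\<Sum>m\<in>{1..<n}. g0 d (m / n)) / n"
      by (rule sum_divide_distrib[symmetric])
    also have "\<dots> \<le> (S + real N * K) / n" using S_ge np by (intro divide_right_mono) auto
    finally have 1: "(LBINT z:{1/real n<..<1}. g0 d z) - real N * K / n \<le> S / n" by (simp add: add_divide_distrib)
    have "(LBINT z:{1<..}. g1 d z) \<le> (\<Sum>k. g1 d (real (n + Suc k) / n) / n)" by (rule sum_g1(2)[OF d n1])
    also have "\<dots> = G / n" unfolding G_def using summ by (rule suminf_divide)
    finally have 2: "(LBINT z:{1<..}. g1 d z) \<le> G / n" .
    show ?thesis using 1 2 by (simp add: add_divide_distrib)
  qed
  then have "ereal ((LBINT z:{1/real n<..<1}. g0 d z) + (LBINT z:{1<..}. g1 d z) - real N * K / n) \<le> ereal ((S + G) / n)"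
    by simp
  also have "ereal ((S + G) / n) = ereal (1 / real n) * (ereal S - ereal (- G))" by simp
  also have "\<dots> \<le> ereal (1 / real n) * (ereal S - T)"
    by (intro ereal_mult_left_mono ereal_minus_mono TG) auto
  also have "\<dots> = alpha a n" unfolding alpha_def S_def T_def by simp
  finally show ?thesis unfolding K_def by (simp add: mult.assoc)
qed



theorem proposition2:
  fixes a :: "nat \<Rightarrow> real" and d :: real
  assumes pos: "\<forall>n\<ge>1. a n > 0"
    and decr: "\<forall>n\<ge>1. a (Suc n) < a n"
    and lim: "a \<longlonglongrightarrow> 0"
    and d: "d > 1"
  shows "((\<exists>N. \<forall>m n. N \<le> m \<longrightarrow> m \<le> n \<longrightarrow> real m powr d * a m \<le> real n powr d * a n)
            \<longrightarrow> limsup (alpha a) \<le> ereal (zeta_d d))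
       \<and> ((\<exists>N. \<forall>m n. N \<le> m \<longrightarrow> m \<le> n \<longrightarrow> real n powr d * a n \<le> real m powr d * a m)
            \<longrightarrow> liminf (alpha a) \<ge> ereal (zeta_d d))"
proof (intro conjI impI)
  have Z: "zeta_d d = (LBINT z:{0<..<1}. g0 d z) + (LBINT z:{1<..}. g1 d z)"
    by (simp add: zeta_d_def g0_def g1_def)
  have lnlim: "(\<lambda>n. c * (b + d * ln (real n)) / real n) \<longlonglongrightarrow> 0" for b c :: real
    by real_asymp
  {
    assume "\<exists>N. \<forall>m n. N \<le> m \<longrightarrow> m \<le> n \<longrightarrow> real m powr d * a m \<le> real n powr d * a n"
    then obtain N0 where N0: "\<forall>m n. N0 \<le> m \<longrightarrow> m \<le> n \<longrightarrow> real m powr d * a m \<le> real n powr d * a n" by blast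
    define N where "N = Suc N0"
    have N1: "1 \<le> N" unfolding N_def by simp
    have mono: "\<forall>m n. N \<le> m \<longrightarrow> m \<le> n \<longrightarrow> real m powr d * a m \<le> real n powr d * a n"
      using N0 unfolding N_def by auto
    define C where "C = \<bar>ln (a 1) - ln (real N powr d * a N)\<bar>"
    define U where "U n = (LBINT z:{0<..<real (n - 1)/real n}. g0 d z) + (LBINT z:{real (n + 1)/real n<..}. g1 d z)
            + real N * (C + d * ln n) / n" for n :: nat
    have ev: "eventually (\<lambda>n. alpha a n \<le> ereal (U n)) sequentially"
      unfolding eventually_sequentially
      using part1_bound[OF pos decr d N1 mono] unfolding U_def C_def by blast
    have "(\<lambda>n. U n) \<longlonglongrightarrow> (LBINT z:{0<..<1}. g0 d z) + (LBINT z:{1<..}. g1 d z) + 0"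
      unfolding U_def by (intro tendsto_add lim_F[OF d] lim_G[OF d] lnlim)
    then have "(\<lambda>n. ereal (U n)) \<longlonglongrightarrow> ereal (zeta_d d)" using Z by simp
    then have "limsup (\<lambda>n. ereal (U n)) = ereal (zeta_d d)" by (intro lim_imp_Limsup) auto
    moreover have "limsup (alpha a) \<le> limsup (\<lambda>n. ereal (U n))" by (rule Limsup_mono[OF ev])
    ultimately show "limsup (alpha a) \<le> ereal (zeta_d d)" by simp
  }
  {
    assume "\<exists>N. \<forall>m n. N \<le> m \<longrightarrow> m \<le> n \<longrightarrow> real n powr d * a n \<le> real m powr d * a m"
    then obtain N0 where N0: "\<forall>m n. N0 \<le> m \<longrightarrow> m \<le> n \<longrightarrow> real n powr d * a n \<le> real m powr d * a m" by blast
    define N where "N = Suc N0"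
    have N1: "1 \<le> N" unfolding N_def by simp
    have mono: "\<forall>m n. N \<le> m \<longrightarrow> m \<le> n \<longrightarrow> real n powr d * a n \<le> real m powr d * a m"
      using N0 unfolding N_def by auto
    have aN: "0 < a N / 2" using pos N1 by simp
    have ev1: "eventually (\<lambda>n. a n < a N / 2) sequentially"
      using order_tendstoD(2)[OF lim aN] .
    define L where "L n = (LBINT z:{1/real n<..<1}. g0 d z) + (LBINT z:{1<..}. g1 d z) - real N * (0 + d * ln n) / n" for n :: nat
    have ev: "eventually (\<lambda>n. ereal (L n) \<le> alpha a n) sequentially"
    proof -
      have "eventually (\<lambda>n. N \<le> n) sequentially" by (rule eventually_ge_at_top)
      then show ?thesis using ev1
      proof eventually_elim
        case (elim n)
        show ?case unfolding L_def using part2_bound[OF pos decr d N1 mono elim(1)] elim(2) by simp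
      qed
    qed
    have "(\<lambda>n. L n) \<longlonglongrightarrow> (LBINT z:{0<..<1}. g0 d z) + (LBINT z:{1<..}. g1 d z) - 0"
      unfolding L_def by (intro tendsto_diff tendsto_add lim_E[OF d] tendsto_const lnlim)
    then have "(\<lambda>n. ereal (L n)) \<longlonglongrightarrow> ereal (zeta_d d)" using Z by simp
    then have "liminf (\<lambda>n. ereal (L n)) = ereal (zeta_d d)" by (intro lim_imp_Liminf) auto
    moreover have "liminf (\<lambda>n. ereal (L n)) \<le> liminf (alpha a)" by (rule Liminf_mono[OF ev])
    ultimately show "liminf (alpha a) \<ge> ereal (zeta_d d)" by simp
  }
qed

end
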